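(* Let $(X,p)$ and $(Y,d)$ be complete separable metric spaces and let $F: X \Rightarrow Y$ be a multi-valued function whose graph is an analytic subset of $X \times Y$. Then the set of points of strong continuity of $F$ is a co-analytic subset of $X$.
   Context: A multi-valued function $F: X \Rightarrow Y$ assigns to each $x$ a nonempty set $F(x)\subseteq Y$; its graph is $\{(x,y): y\in F(x)\}$. $F$ is strongly continuous at $x$ if for every $y \in F(x)$ and every $\varepsilon>0$ there is $\delta>0$ such that for every $x' \in B_p(x,\delta)$ there is $y' \in F(x')$ with $d(y,y')<\varepsilon$. A subset of a complete separable metric space is analytic if it is a continuous image of a closed subset of a complete separable metric space, and co-analytic if its complement is analytic. *)

theory Defs
  imports "HOL-Analysis.Analysis"
begin

text \<open>Analytic set: a continuous image of a closed subset of a complete separable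
  metric space. Every complete separable metric space is homeomorphic to a closed
  subset of the Polish space nat => real (product topology), so it suffices to take
  closed subsets of that fixed Polish space as domains.\<close>
definition analytic_set :: "'a::topological_space set \<Rightarrow> bool" where
  "analytic_set A \<longleftrightarrow>
     (\<exists>(C :: (nat \<Rightarrow> real) set) f. closed C \<and> continuous_on C f \<and> f ` C = A)"

definition coanalytic_set :: "'a::topological_space set \<Rightarrow> bool" where
  "coanalytic_set A \<longleftrightarrow> analytic_set (- A)"

definition graph_mv :: "('a \<Rightarrow> 'b set) \<Rightarrow> ('a \<times> 'b) set" where
  "graph_mv F = {(x, y). y \<in> F x}"

definition strongly_continuous_at :: "('a::metric_space \<Rightarrow> 'b::metric_space set) \<Rightarrow> 'a \<Rightarrow> bool" where
  "strongly_continuous_at F x \<longleftrightarrow>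
     (\<forall>y \<in> F x. \<forall>\<epsilon>>0. \<exists>\<delta>>0. \<forall>x' \<in> ball x \<delta>. \<exists>y' \<in> F x'. dist y y' < \<epsilon>)"

end

theory Submission imports Defs begin

lemma analytic_UN_nat:
  fixes A :: "nat \<Rightarrow> 'a::topological_space set"
  assumes "\<And>n. analytic_set (A n)"
  shows "analytic_set (\<Union>n. A n)"
proof -
  obtain C :: "nat \<Rightarrow> (nat\<Rightarrow>real) set" and f :: "nat \<Rightarrow> (nat\<Rightarrow>real) \<Rightarrow> 'a" where Cf: "\<And>n. closed (C n) \<and> continuous_on (C n) (f n) \<and> f n ` C n = A n"
  proof -
    have "\<forall>n. \<exists>Cf::(nat\<Rightarrow>real) set \<times> ((nat\<Rightarrow>real) \<Rightarrow> 'a). closed (fst Cf) \<and> continuous_on (fst Cf) (snd Cf) \<and> snd Cf ` fst Cf = A n"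
      using assms unfolding analytic_set_def by fastforce
    then obtain Cf :: "nat \<Rightarrow> (nat\<Rightarrow>real) set \<times> ((nat\<Rightarrow>real) \<Rightarrow> 'a)" where h: "\<And>n. closed (fst (Cf n)) \<and> continuous_on (fst (Cf n)) (snd (Cf n)) \<and> snd (Cf n) ` fst (Cf n) = A n"
      by (subst (asm) choice_iff) blast
    show ?thesis using that[of "\<lambda>n. fst (Cf n)" "\<lambda>n. snd (Cf n)"] h by blast
  qed
  define tl where "tl = (\<lambda>z::nat\<Rightarrow>real. \<lambda>i. z (Suc i))"
  define D where "D = {z. \<exists>n. z 0 = real n \<and> tl z \<in> C n}"
  define g where "g = (\<lambda>z. f (nat \<lfloor>z 0\<rfloor>) (tl z))"
  have ctl: "continuous_on UNIV tl"
    unfolding tl_def by (intro continuous_on_coordinatewise_then_product continuous_on_product_coordinates)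
  have c0: "isCont (\<lambda>z::nat\<Rightarrow>real. z 0) z" for z
    using continuous_on_eq_continuous_at[OF open_UNIV, of "\<lambda>z::nat\<Rightarrow>real. z 0"] continuous_on_product_coordinates[of 0] by simp
  have ctl': "isCont tl z" for z
    using continuous_on_eq_continuous_at[OF open_UNIV, of tl] ctl by simp
  have "closed D"
    unfolding closed_sequential_limits
  proof (intro allI impI)
    fix x l assume h: "(\<forall>k. x k \<in> D) \<and> x \<longlonglongrightarrow> l"
    have "\<forall>k. \<exists>m. x k 0 = real m \<and> tl (x k) \<in> C m" using h unfolding D_def by blast
    then obtain n :: "nat \<Rightarrow> nat" where n: "\<And>k. x k 0 = real (n k) \<and> tl (x k) \<in> C (n k)"
      by (subst (asm) choice_iff) blast
    have t0: "(\<lambda>k. x k 0) \<longlonglongrightarrow> l 0"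
      using isCont_tendsto_compose[OF c0[of l], of x] h by simp
    have tt: "(\<lambda>k. tl (x k)) \<longlonglongrightarrow> tl l"
      using isCont_tendsto_compose[OF ctl'[of l], of x] h by simp
    obtain K where K: "\<And>k. k \<ge> K \<Longrightarrow> dist (x k 0) (l 0) < 1/2"
      using tendstoD[OF t0, of "1/2"] unfolding eventually_sequentially by auto
    have nk: "n k = n K" if "k \<ge> K" for k
    proof -
      have "dist (x k 0) (x K 0) < 1"
        using K[OF that] K[of K] dist_triangle_half_l[of "x k 0" "l 0" 1 "x K 0"] by simp
      then have "\<bar>real (n k) - real (n K)\<bar> < 1" using n by (simp add: dist_real_def)
      then show ?thesis by linarith
    qed
    have nK: "n (k + K) = n K" for k using nk[of "k + K"] by simp
    have "(\<lambda>k. x (k + K) 0) \<longlonglongrightarrow> l 0" using LIMSEQ_ignore_initial_segment[OF t0] .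
    moreover have "(\<lambda>k. x (k + K) 0) = (\<lambda>k. real (n K))"
    proof
      fix k show "x (k + K) 0 = real (n K)" using n[of "k + K"] nK[of k] by simp
    qed
    ultimately have "(\<lambda>k. real (n K)) \<longlonglongrightarrow> l 0" by simp
    then have l0: "l 0 = real (n K)" using LIMSEQ_unique[OF tendsto_const] by metis
    have "(\<lambda>k. tl (x (k + K))) \<longlonglongrightarrow> tl l" using LIMSEQ_ignore_initial_segment[OF tt] .
    moreover have "\<And>k. tl (x (k + K)) \<in> C (n K)"
    proof -
      fix k show "tl (x (k + K)) \<in> C (n K)" using n[of "k + K"] nK[of k] by simp
    qed
    ultimately have "tl l \<in> C (n K)" using Cf[of "n K"] closed_sequentially[of "C (n K)" "\<lambda>k. tl (x (k + K))" "tl l"] by simp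
    then show "l \<in> D" unfolding D_def using l0 by blast
  qed
  moreover have "continuous_on D g"
    unfolding continuous_on_eq_continuous_within
  proof
    fix z assume "z \<in> D"
    then obtain n where n: "z 0 = real n" "tl z \<in> C n" unfolding D_def by blast
    have "open ((\<lambda>w::nat\<Rightarrow>real. w 0) -` {real n - 1/2 <..< real n + 1/2})"
      by (rule open_vimage[OF open_greaterThanLessThan continuous_on_product_coordinates])
    then obtain \<delta> where \<delta>: "\<delta> > 0" "ball z \<delta> \<subseteq> (\<lambda>w::nat\<Rightarrow>real. w 0) -` {real n - 1/2 <..< real n + 1/2}"
    proof -
      have "z \<in> (\<lambda>w::nat\<Rightarrow>real. w 0) -` {real n - 1/2 <..< real n + 1/2}" using n(1) by simp
      moreover note \<open>open ((\<lambda>w::nat\<Rightarrow>real. w 0) -` {real n - 1/2 <..< real n + 1/2})\<close>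
      ultimately have "\<exists>e>0. ball z e \<subseteq> (\<lambda>w::nat\<Rightarrow>real. w 0) -` {real n - 1/2 <..< real n + 1/2}"
        unfolding open_contains_ball by blast
      then show ?thesis using that by blast
    qed
    have D': "\<And>w. w \<in> D \<Longrightarrow> dist w z < \<delta> \<Longrightarrow> w 0 = real n \<and> tl w \<in> C n"
    proof -
      fix w assume "w \<in> D" "dist w z < \<delta>"
      then obtain m where m: "w 0 = real m" "tl w \<in> C m" unfolding D_def by blast
      have "w \<in> ball z \<delta>" using \<open>dist w z < \<delta>\<close> by (simp add: dist_commute)
      then have "\<bar>real m - real n\<bar> < 1/2 + 1/2" using \<delta> m by auto
      then have "m = n" by linarith
      then show "w 0 = real n \<and> tl w \<in> C n" using m by simp
    qed
    have "continuous_on (D \<inter> tl -` C n) (f n \<circ> tl)"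
      apply (rule continuous_on_compose)
       apply (rule continuous_on_subset[OF ctl], simp)
      apply (rule continuous_on_subset) using Cf apply blast by auto
    then have "continuous (at z within (D \<inter> tl -` C n)) (f n \<circ> tl)"
      using \<open>z \<in> D\<close> n unfolding continuous_on_eq_continuous_within by simp
    then have "continuous (at z within D) (f n \<circ> tl)"
    proof -
      have "at z within D = at z within (D \<inter> tl -` C n)"
        apply (rule at_within_nhd[of _ "ball z \<delta>"]) using \<delta> D' by (auto simp: dist_commute)
      then show ?thesis
        using \<open>continuous (at z within (D \<inter> tl -` C n)) (f n \<circ> tl)\<close> unfolding continuous_within by simp
    qed
    then show "continuous (at z within D) g"
      apply (rule continuous_transform_within[OF _ \<delta>(1) \<open>z\<in>D\<close>])
    proof -
      fix x' assume "x' \<in> D" "dist x' z < \<delta>"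
      then have "x' 0 = real n" using D' by blast
      then show "(f n \<circ> tl) x' = g x'" unfolding g_def by simp
    qed
  qed
  moreover have "g ` D = (\<Union>n. A n)"
  proof
    show "g ` D \<subseteq> (\<Union>n. A n)"
    proof
      fix a assume "a \<in> g ` D"
      then obtain z where z: "z \<in> D" "a = g z" by blast
      then obtain n where n: "z 0 = real n" "tl z \<in> C n" unfolding D_def by blast
      have "a = f n (tl z)" using z(2) n(1) unfolding g_def by simp
      then have "a \<in> A n" using Cf n(2) by blast
      then show "a \<in> (\<Union>n. A n)" by blast
    qed
    show "(\<Union>n. A n) \<subseteq> g ` D"
    proof
      fix a assume "a \<in> (\<Union>n. A n)"
      then obtain n c where c: "c \<in> C n" "a = f n c" using Cf by blast
      define z where "z = case_nat (real n) c"
      have "tl z = c" unfolding z_def tl_def by simp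
      have z0: "z 0 = real n" unfolding z_def by simp
      have "z \<in> D" unfolding D_def using z0 \<open>tl z = c\<close> c(1) by blast
      moreover have "g z = a" unfolding g_def using z0 \<open>tl z = c\<close> c(2) by simp
      ultimately have "z \<in> D" "g z = a" by simp_all
      then show "a \<in> g ` D" by blast
    qed
  qed
  ultimately show ?thesis unfolding analytic_set_def by (intro exI[of _ D] exI[of _ g]) simp
qed


lemma analytic_inter_closed:
  fixes S :: "'a::topological_space set"
  assumes "analytic_set S" "closed K" shows "analytic_set (S \<inter> K)"
proof -
  obtain C :: "(nat\<Rightarrow>real) set" and f :: "(nat\<Rightarrow>real) \<Rightarrow> 'a" where h: "closed C" "continuous_on C f" "f ` C = S"
    using assms(1) unfolding analytic_set_def by blast
  have c1: "closed (C \<inter> f -` K)" by (rule continuous_closed_preimage[OF h(2) h(1) assms(2)])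
  have c2: "continuous_on (C \<inter> f -` K) f" by (rule continuous_on_subset[OF h(2)]) blast
  have c3: "f ` (C \<inter> f -` K) = S \<inter> K" using h(3) by blast
  show ?thesis unfolding analytic_set_def
    by (rule exI[of _ "C \<inter> f -` K"], rule exI[of _ f]) (intro conjI c1 c2 c3)
qed

lemma analytic_fst:
  assumes "analytic_set (S :: ('a::topological_space \<times> 'b::topological_space) set)"
  shows "analytic_set (fst ` S)"
proof -
  obtain C :: "(nat\<Rightarrow>real) set" and f :: "(nat\<Rightarrow>real) \<Rightarrow> 'a \<times> 'b" where h: "closed C" "continuous_on C f" "f ` C = S"
    using assms(1) unfolding analytic_set_def by blast
  have c2: "continuous_on C (fst \<circ> f)" by (rule continuous_on_compose[OF h(2) continuous_on_fst[OF continuous_on_id]])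
  have c3: "(fst \<circ> f) ` C = fst ` S" unfolding h(3)[symmetric] image_comp ..
  show ?thesis unfolding analytic_set_def
    by (rule exI[of _ C], rule exI[of _ "fst \<circ> f"]) (intro conjI h(1) c2 c3)
qed

lemma analytic_UN_countable:
  assumes "countable I" "I \<noteq> {}" "\<And>i. i \<in> I \<Longrightarrow> analytic_set (A i)"
  shows "analytic_set (\<Union>i\<in>I. A i)"
proof -
  have r: "range (from_nat_into I) = I" by (rule range_from_nat_into[OF assms(2,1)])
  have "(\<Union>n. A (from_nat_into I n)) = \<Union>(A ` range (from_nat_into I))" by blast
  then have e: "(\<Union>i\<in>I. A i) = (\<Union>n. A (from_nat_into I n))" unfolding r by simp
  have "analytic_set (\<Union>n. A (from_nat_into I n))"
    by (rule analytic_UN_nat) (simp add: assms from_nat_into)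
  then show ?thesis unfolding e .
qed

theorem proposition3p4:
  fixes F :: "'a::polish_space \<Rightarrow> 'b::polish_space set"
  assumes nonempty: "\<And>x. F x \<noteq> {}"
    and analytic_graph: "analytic_set (graph_mv F)"
  shows "coanalytic_set {x. strongly_continuous_at F x}"
proof -
  obtain D :: "'b set" where D: "countable D" "\<And>X. open X \<Longrightarrow> X \<noteq> {} \<Longrightarrow> \<exists>d\<in>D. d \<in> X"
    by (rule countable_dense_setE) blast
  define r where "r = (\<lambda>n::nat. 1 / real (Suc n))"
  have rpos: "r n > 0" for n unfolding r_def by simp
  define E where "E = (\<lambda>d n. {x'. F x' \<inter> ball d (3 * r n) = {}})"
  define S where "S = (\<lambda>p. fst ` (graph_mv F \<inter> (closure (E (fst p) (snd p)) \<times> cball (fst p) (r (snd p)))))"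
  have eq: "- {x. strongly_continuous_at F x} = (\<Union>p\<in>D \<times> UNIV. S p)"
  proof (intro set_eqI iffI)
    fix x assume "x \<in> - {x. strongly_continuous_at F x}"
    then obtain y \<epsilon> where y: "y \<in> F x" "\<epsilon> > 0"
      and h: "\<And>\<delta>. \<delta> > 0 \<Longrightarrow> \<exists>x'\<in>ball x \<delta>. \<forall>y'\<in>F x'. dist y y' \<ge> \<epsilon>"
      unfolding strongly_continuous_at_def by (auto simp: not_less) (meson not_le)
    obtain n where n: "inverse (real (Suc n)) < \<epsilon> / 4" using reals_Archimedean[of "\<epsilon>/4"] y(2) by auto
    have rn: "4 * r n < \<epsilon>" using n unfolding r_def by (simp add: field_simps)
    obtain d where d: "d \<in> D" "d \<in> ball y (r n)" using D(2)[of "ball y (r n)"] rpos[of n] by auto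
    have "x \<in> closure (E d n)"
      unfolding closure_approachable
    proof (intro allI impI)
      fix e :: real assume "e > 0"
      then obtain x' where x': "x' \<in> ball x e" "\<forall>y'\<in>F x'. dist y y' \<ge> \<epsilon>" using h by blast
      have "F x' \<inter> ball d (3 * r n) = {}"
      proof (rule ccontr)
        assume "F x' \<inter> ball d (3 * r n) \<noteq> {}"
        then obtain y' where "y' \<in> F x'" "dist d y' < 3 * r n" by auto
        moreover have "dist y y' \<le> dist y d + dist d y'" by (rule dist_triangle)
        moreover have "dist y d < r n" using d(2) by simp
        moreover have "\<epsilon> \<le> dist y y'" using x'(2) \<open>y' \<in> F x'\<close> by blast
        ultimately show False using rn by linarith
      qed
      then show "\<exists>x'\<in>E d n. dist x' x < e" using x'(1) unfolding E_def by (auto simp: dist_commute)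
    qed
    moreover have "y \<in> cball d (r n)" using d(2) by (simp add: dist_commute)
    ultimately have xy: "(x, y) \<in> graph_mv F \<inter> (closure (E d n) \<times> cball d (r n))"
      unfolding graph_mv_def using y(1) by simp
    have "x \<in> S (d, n)" unfolding S_def prod.sel by (rule image_eqI[where x="(x,y)"]) (use xy in simp_all)
    then show "x \<in> (\<Union>p\<in>D \<times> UNIV. S p)" using d(1) by blast
  next
    fix x assume "x \<in> (\<Union>p\<in>D \<times> UNIV. S p)"
    then obtain d n where "x \<in> S (d, n)" by blast
    then obtain z where z: "z \<in> graph_mv F \<inter> (closure (E d n) \<times> cball d (r n))" "x = fst z"
      unfolding S_def prod.sel by blast
    obtain y where "z = (x, y)" using z(2) by (metis prod.collapse)
    then have y: "y \<in> F x" "x \<in> closure (E d n)" "y \<in> cball d (r n)"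
      using z(1) unfolding graph_mv_def by auto
    have nb: "\<not> (\<exists>\<delta>>0. \<forall>x'\<in>ball x \<delta>. \<exists>y'\<in>F x'. dist y y' < r n)"
    proof
      assume "\<exists>\<delta>>0. \<forall>x'\<in>ball x \<delta>. \<exists>y'\<in>F x'. dist y y' < r n"
      then obtain \<delta> where \<delta>: "\<delta> > 0" "\<forall>x'\<in>ball x \<delta>. \<exists>y'\<in>F x'. dist y y' < r n" by blast
      obtain x' where x': "x' \<in> E d n" "dist x' x < \<delta>" using y(2) \<delta>(1) unfolding closure_approachable by blast
      then have "x' \<in> ball x \<delta>" by (simp add: dist_commute)
      then obtain y' where "y' \<in> F x'" "dist y y' < r n" using \<delta> by blast
      moreover have "dist d y' \<le> dist d y + dist y y'" by (rule dist_triangle)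
      ultimately have "y' \<in> F x' \<inter> ball d (3 * r n)" using y(3) rpos[of n] by auto
      then show False using x'(1) unfolding E_def by blast
    qed
    then have "\<not> strongly_continuous_at F x"
      unfolding strongly_continuous_at_def using y(1) rpos[of n] by blast
    then show "x \<in> - {x. strongly_continuous_at F x}" by simp
  qed
  have "D \<noteq> {}" using D(2)[of UNIV] by auto
  then have "analytic_set (\<Union>p\<in>D \<times> UNIV. S p)"
    apply (intro analytic_UN_countable)
      apply (simp add: D(1))
     apply simp
    unfolding S_def
    by (intro analytic_fst analytic_inter_closed analytic_graph closed_Times closed_closure closed_cball)
  then show ?thesis unfolding coanalytic_set_def eq .
qed

end
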